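(* Let $K$ and $S$ be compact Hausdorff spaces and let $T\colon C(K)\to C(S)$ be a linear isometric embedding. Let $F_T\colon S\to C(K)^*$ be $F_T(s):=T^*(\delta_s)$, i.e. $\langle f,F_T(s)\rangle=(Tf)(s)$. Then $T$ is a U-embedding if and only if there exist a closed subset $S_0\subset S$, a homeomorphism $h\colon K\to S_0$ and a continuous function $\varepsilon\colon K\to\{-1,1\}$ such that (i) $F_T(h(k))=\varepsilon(k)\delta_k$ for every $k\in K$, and (ii) $\|F_T(s)\|<1$ for every $s\in S\setminus S_0$.
   Context: $C(K)$, $C(S)$ carry the sup norm; $C(K)^*$ is identified with regular Borel signed measures on $K$ with total variation norm, $\delta_k$ being the Dirac measure at $k$. A linear isometry $T\colon X\to Y$ is a U-embedding if every $x^*\in X^*$ has a unique $y^*\in Y^*$ with $T^*(y^* )=x^*$ and $\|y^*\|=\|x^*\|$. *)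

theory Defs
  imports "HOL-Analysis.Analysis"
begin

text \<open>C(K) is modelled by the bounded continuous functions on K (equal to C(K) for compact K),
  with the sup norm; the dual space X* by bounded linear functionals X \<Rightarrow>L real with the operator norm.\<close>

definition dirac :: "'a::topological_space \<Rightarrow> (('a, real) bcontfun \<Rightarrow>\<^sub>L real)" where
  "dirac k = Blinfun (\<lambda>f. apply_bcontfun f k)"

definition FT :: "(('a::topological_space, real) bcontfun \<Rightarrow> ('b::topological_space, real) bcontfun)
    \<Rightarrow> 'b \<Rightarrow> (('a, real) bcontfun \<Rightarrow>\<^sub>L real)" where
  "FT T s = Blinfun (\<lambda>f. apply_bcontfun (T f) s)"

definition linear_isometry :: "('a::real_normed_vector \<Rightarrow> 'b::real_normed_vector) \<Rightarrow> bool" where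
  "linear_isometry T \<longleftrightarrow> linear T \<and> (\<forall>x. norm (T x) = norm x)"

definition U_embedding :: "('a::real_normed_vector \<Rightarrow> 'b::real_normed_vector) \<Rightarrow> bool" where
  "U_embedding T \<longleftrightarrow> linear_isometry T \<and>
     (\<forall>x'::'a \<Rightarrow>\<^sub>L real. \<exists>!y'::'b \<Rightarrow>\<^sub>L real.
        (\<lambda>x. blinfun_apply y' (T x)) = blinfun_apply x' \<and> norm y' = norm x')"

end

theory Submission
  imports Defs
begin


lemma Hausdorff_t2: "Hausdorff_space (euclidean :: 'a::t2_space topology)"
  unfolding Hausdorff_space_def by (metis disjnt_def hausdorff open_openin)

lemma urysohn_t2:
  fixes S T :: "'a::t2_space set"
  assumes "compact (UNIV::'a set)" "closed S" "closed T" "S \<inter> T = {}"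
  obtains f :: "'a \<Rightarrow> real" where "continuous_on UNIV f" "\<And>x. 0 \<le> f x \<and> f x \<le> 1"
    "\<And>x. x \<in> S \<Longrightarrow> f x = 0" "\<And>x. x \<in> T \<Longrightarrow> f x = 1"
proof -
  have c: "compact_space (euclidean :: 'a topology)" by (simp add: compact_space_def assms(1))
  have n: "normal_space (euclidean :: 'a topology)"
    using compact_Hausdorff_or_regular_imp_normal_space[OF c] Hausdorff_t2[where 'a='a] by blast
  have cS: "closedin euclidean S" "closedin euclidean T" using assms by simp_all
  have d: "disjnt S T" using assms(4) by (simp add: disjnt_def)
  obtain f where f: "continuous_map euclidean (top_of_set {0..1::real}) f" "f ` S \<subseteq> {0}" "f ` T \<subseteq> {1}"
    by (rule Urysohn_lemma[OF n cS d, of 0 1]) simp_all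
  have "continuous_on UNIV f" using f(1) by (simp add: continuous_map_in_subtopology)
  moreover have "\<And>x. 0 \<le> f x \<and> f x \<le> 1" using f(1) by (auto simp: continuous_map_in_subtopology Pi_iff)
  moreover have "\<And>x. x \<in> S \<Longrightarrow> f x = 0" "\<And>x. x \<in> T \<Longrightarrow> f x = 1" using f(2,3) by auto
  ultimately show ?thesis using that by blast
qed



lemma mk_bcf:
  fixes f :: "'a::topological_space \<Rightarrow> real"
  assumes "compact (UNIV::'a set)" "continuous_on UNIV f"
  shows "apply_bcontfun (Bcontfun f) = f"
proof -
  have "bounded (range f)" using assms compact_continuous_image compact_imp_bounded by blast
  then have "f \<in> bcontfun" using assms by (simp add: bcontfun_def)
  then show ?thesis by (simp add: Bcontfun_inverse)
qed

lemma norm_attained: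
  fixes f :: "('a::topological_space, real) bcontfun"
  assumes "compact (UNIV::'a set)"
  obtains x where "\<bar>f x\<bar> = norm f"
proof -
  have "continuous_on UNIV (\<lambda>x. \<bar>f x\<bar>)" by (intro continuous_intros) simp
  then obtain x0 where "\<forall>y. \<bar>f y\<bar> \<le> \<bar>f x0\<bar>"
    using continuous_attains_sup[OF assms, of "\<lambda>x. \<bar>f x\<bar>"] by auto
  then have "norm f \<le> \<bar>f x0\<bar>" by (intro norm_bound) simp
  moreover have "\<bar>f x0\<bar> \<le> norm f" using norm_bounded[of f x0] by simp
  ultimately show ?thesis using that by force
qed

lemma abs_le_norm: "\<bar>apply_bcontfun (f::('a::topological_space, real) bcontfun) x\<bar> \<le> norm f"
  using norm_bounded[of f x] by simp

lemma norm_one: "norm (const_bcontfun (1::real) :: ('a::topological_space, real) bcontfun) = 1"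
proof -
  have "norm (const_bcontfun (1::real) :: ('a, real) bcontfun) \<le> 1" by (rule norm_bound) simp
  moreover have "1 \<le> norm (const_bcontfun (1::real) :: ('a, real) bcontfun)"
    using abs_le_norm[of "const_bcontfun (1::real) :: ('a, real) bcontfun" undefined] by simp
  ultimately show ?thesis by simp
qed

lemma apply_sum: "apply_bcontfun (sum f A) x = (\<Sum>a\<in>A. apply_bcontfun (f a) x)"
  for f :: "'i \<Rightarrow> ('a::topological_space, real) bcontfun"
  by (induction A rule: infinite_finite_induct) auto

lemma bl_dirac: "bounded_linear (\<lambda>f::('a::topological_space, real) bcontfun. apply_bcontfun f k)"
  by (rule bounded_linear_intro[where K=1]) (auto simp: abs_le_norm)

lemma dirac_apply[simp]: "blinfun_apply (dirac k) f = apply_bcontfun f k"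
  unfolding dirac_def by (simp add: bounded_linear_Blinfun_apply[OF bl_dirac[of k]])

lemma norm_dirac: "norm (dirac (k::'a::topological_space)) = 1"
proof -
  have "norm (dirac k) \<le> 1" by (rule norm_blinfun_bound) (auto simp: abs_le_norm)
  moreover have "1 \<le> norm (dirac k)"
    using norm_blinfun[of "dirac k" "const_bcontfun 1"] by (simp add: norm_one)
  ultimately show ?thesis by simp
qed

context
  fixes T :: "('a::topological_space, real) bcontfun \<Rightarrow> ('b::topological_space, real) bcontfun"
  assumes LI: "linear_isometry T"
begin

lemma T_lin: "linear T" using LI by (simp add: linear_isometry_def)
lemma T_iso: "norm (T f) = norm f" using LI by (simp add: linear_isometry_def)

lemma T_abs: "\<bar>T f s\<bar> \<le> norm f" using abs_le_norm[of "T f" s] T_iso by simp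

lemma bl_FT: "bounded_linear (\<lambda>f. apply_bcontfun (T f) s)"
proof (rule bounded_linear_intro[where K=1])
  show "T (x + y) s = T x s + T y s" for x y using linear_add[OF T_lin] by simp
  show "T (r *\<^sub>R x) s = r *\<^sub>R T x s" for r x using linear_scale[OF T_lin] by simp
qed (auto simp: T_abs)

lemma FT_apply[simp]: "blinfun_apply (FT T s) f = apply_bcontfun (T f) s"
  unfolding FT_def using bounded_linear_Blinfun_apply[OF bl_FT] by simp

lemma norm_FT: "norm (FT T s) \<le> 1"
  by (rule norm_blinfun_bound) (auto simp: T_abs)

lemma T_add: "T (f + g) s = T f s + T g s" using linear_add[OF T_lin] by simp
lemma T_diff: "T (f - g) s = T f s - T g s" using linear_diff[OF T_lin] by simp
lemma T_scale: "T (c *\<^sub>R f) s = c * T f s" using linear_scale[OF T_lin] by simp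
lemma T_zero: "T 0 = 0" using linear_0[OF T_lin] by simp
lemma T_sum: "T (sum f A) s = (\<Sum>a\<in>A. T (f a) s)"
  using linear_sum[OF T_lin, of f A] by (simp add: apply_sum)

end



definition Eop :: "('a::topological_space \<Rightarrow> 'b::topological_space) \<Rightarrow> ('a \<Rightarrow> real) \<Rightarrow> ('b, real) bcontfun \<Rightarrow> ('a, real) bcontfun"
  where "Eop h e g = Bcontfun (\<lambda>k. e k * g (h k))"

definition Yop :: "('a::topological_space \<Rightarrow> 'b::topological_space) \<Rightarrow> ('a \<Rightarrow> real) \<Rightarrow> (('a, real) bcontfun \<Rightarrow>\<^sub>L real) \<Rightarrow> (('b, real) bcontfun \<Rightarrow>\<^sub>L real)"
  where "Yop h e x' = Blinfun (\<lambda>g. blinfun_apply x' (Eop h e g))"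

context
  fixes h :: "'a::topological_space \<Rightarrow> 'b::topological_space" and e :: "'a \<Rightarrow> real"
  assumes cK: "compact (UNIV::'a set)" and hc: "continuous_on UNIV h" and ec: "continuous_on UNIV e"
    and e1: "\<And>k. \<bar>e k\<bar> = 1"
begin

lemma Eop_apply[simp]: "apply_bcontfun (Eop h e g) k = e k * g (h k)"
proof -
  have "continuous_on UNIV (\<lambda>k. e k * g (h k))"
    by (intro continuous_intros ec continuous_on_compose2[OF continuous_on_apply_bcontfun hc]) auto
  then show ?thesis unfolding Eop_def using mk_bcf[OF cK] by simp
qed

lemma bl_Eop: "bounded_linear (Eop h e)"
proof (rule bounded_linear_intro[where K=1])
  show "Eop h e (x + y) = Eop h e x + Eop h e y" for x y
    by (rule bcontfun_eqI) (simp add: algebra_simps)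
  show "Eop h e (r *\<^sub>R x) = r *\<^sub>R Eop h e x" for r x
    by (rule bcontfun_eqI) (simp add: algebra_simps)
  show "norm (Eop h e x) \<le> norm x * 1" for x
    by (simp, rule norm_bound) (simp add: abs_mult e1 abs_le_norm)
qed

lemma norm_Eop: "norm (Eop h e g) \<le> norm g"
  by (rule norm_bound) (simp add: abs_mult e1 abs_le_norm)

lemma ee: "e k * e k = 1" using e1[of k] by (metis abs_mult_self_eq mult_1_left)

lemma Yop_apply[simp]: "blinfun_apply (Yop h e x') g = blinfun_apply x' (Eop h e g)"
proof -
  have "bounded_linear (\<lambda>g. blinfun_apply x' (Eop h e g))"
    by (intro bounded_linear_compose[OF blinfun.bounded_linear_right bl_Eop])
  then show ?thesis unfolding Yop_def by (simp add: bounded_linear_Blinfun_apply)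
qed

context
  fixes T :: "('a, real) bcontfun \<Rightarrow> ('b, real) bcontfun"
  assumes LI: "linear_isometry T" and hT: "\<And>f k. T f (h k) = e k * f k"
begin

lemma Eop_T: "Eop h e (T f) = f"
  by (rule bcontfun_eqI) (simp add: hT mult.assoc[symmetric] ee)

lemma Yop_T: "blinfun_apply (Yop h e x') (T f) = blinfun_apply x' f"
  by (simp add: Eop_T)

lemma norm_Yop: "norm (Yop h e x') = norm x'"
proof (rule antisym)
  show "norm (Yop h e x') \<le> norm x'"
  proof (rule norm_blinfun_bound)
    fix g
    have "norm (blinfun_apply x' (Eop h e g)) \<le> norm x' * norm (Eop h e g)" by (rule norm_blinfun)
    also have "\<dots> \<le> norm x' * norm g" by (intro mult_left_mono norm_Eop) simp
    finally show "norm (blinfun_apply (Yop h e x') g) \<le> norm x' * norm g" by simp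
  qed simp
  show "norm x' \<le> norm (Yop h e x')"
  proof (rule norm_blinfun_bound)
    fix f
    have "norm (blinfun_apply x' f) = norm (blinfun_apply (Yop h e x') (T f))" by (simp add: Eop_T)
    also have "\<dots> \<le> norm (Yop h e x') * norm (T f)" by (rule norm_blinfun)
    finally show "norm (blinfun_apply x' f) \<le> norm (Yop h e x') * norm f" using T_iso[OF LI] by simp
  qed simp
qed

end
end


lemma avg_all_eq:
  fixes a :: "'i \<Rightarrow> real"
  assumes fin: "finite A" and le: "\<And>i. i \<in> A \<Longrightarrow> \<sigma> * a i \<le> 1"
    and sum: "(\<Sum>i\<in>A. \<sigma> * a i) = real (card A)"
  shows "\<And>i. i \<in> A \<Longrightarrow> \<sigma> * a i = 1"
proof -
  have "(\<Sum>i\<in>A. 1 - \<sigma> * a i) = 0" using sum fin by (simp add: sum_subtractf)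
  then have "\<forall>i\<in>A. 1 - \<sigma> * a i = 0"
    using sum_nonneg_eq_0_iff[OF fin, of "\<lambda>i. 1 - \<sigma> * a i"] le by auto
  then show "\<And>i. i \<in> A \<Longrightarrow> \<sigma> * a i = 1" by auto
qed

context
  fixes T :: "('a::t2_space, real) bcontfun \<Rightarrow> ('b::t2_space, real) bcontfun"
  assumes LI: "linear_isometry T"
    and cK: "compact (UNIV::'a set)" and cS: "compact (UNIV::'b set)"
begin

lemma holsz: "\<exists>s \<sigma>. \<bar>\<sigma>\<bar> = 1 \<and> (\<forall>f. T f s = \<sigma> * f k)"
proof -
  define one where "one = (const_bcontfun 1 :: ('a, real) bcontfun)"
  define P where "P = {p. norm (p :: ('a, real) bcontfun) \<le> 1 \<and> p k = 1}"
  define D where "D p = {s. T p s = T one s \<and> \<bar>T one s\<bar> = 1}" for p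
  have one_P: "one \<in> P" by (simp add: P_def one_def norm_one)
  have clD: "closed (D p)" for p
    unfolding D_def by (intro closed_Collect_conj closed_Collect_eq continuous_intros) auto
  have fip: "UNIV \<inter> (\<Inter>p\<in>F. D p) \<noteq> {}" if "finite F" "F \<subseteq> P" for F
  proof -
    define G where "G = insert one F"
    have G: "finite G" "G \<subseteq> P" "G \<noteq> {}" using that one_P by (auto simp: G_def)
    define n where "n = card G"
    have n: "n > 0" using G by (simp add: n_def card_gt_0_iff)
    define q where "q = (1 / real n) *\<^sub>R sum id G"
    have qx: "q x = (1 / real n) * (\<Sum>p\<in>G. apply_bcontfun p x)" for x by (simp add: q_def apply_sum)
    have "q k = 1" using G n by (simp add: qx P_def subset_iff n_def)
    moreover have "norm q \<le> 1"
    proof (rule norm_bound)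
      fix x
      have "\<bar>\<Sum>p\<in>G. apply_bcontfun p x\<bar> \<le> (\<Sum>p\<in>G. 1)"
        using G by (intro order.trans[OF sum_abs] sum_mono)
           (auto simp: P_def intro: order.trans[OF abs_le_norm])
      then show "norm (q x) \<le> 1" using n by (simp add: qx abs_mult n_def divide_simps)
    qed
    ultimately have nq: "norm q = 1" using abs_le_norm[of q k] by simp
    obtain s where s: "\<bar>T q s\<bar> = 1" using norm_attained[OF cS, of "T q"] T_iso[OF LI] nq by auto
    define \<sigma> where "\<sigma> = T q s"
    have sig: "\<sigma> * \<sigma> = 1" using s by (metis \<sigma>_def abs_mult_self_eq mult_1_left)
    have Tq: "T q s = (1 / real n) * (\<Sum>p\<in>G. T p s)"
      by (simp add: q_def T_scale[OF LI] T_sum[OF LI])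
    have le: "\<sigma> * T p s \<le> 1" if "p \<in> G" for p
    proof -
      have "\<bar>\<sigma> * T p s\<bar> \<le> 1" using T_abs[OF LI, of p s] that G s
        by (auto simp: abs_mult \<sigma>_def P_def)
      then show ?thesis by simp
    qed
    have "(\<Sum>p\<in>G. \<sigma> * T p s) = \<sigma> * (real n * T q s)"
      using n by (simp add: Tq sum_distrib_left)
    also have "\<dots> = real (card G)" using sig by (simp add: \<sigma>_def n_def)
    finally have sumeq: "(\<Sum>p\<in>G. \<sigma> * T p s) = real (card G)" .
    have all: "\<sigma> * T p s = 1" if "p \<in> G" for p
      using avg_all_eq[where A=G and \<sigma>=\<sigma> and a="\<lambda>p. T p s", OF G(1) le sumeq that] by simp
    have TG: "T p s = \<sigma>" if "p \<in> G" for p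
    proof -
      have "\<sigma> * (\<sigma> * T p s) = \<sigma>" using all[OF that] by simp
      then show ?thesis using sig by (simp add: mult.assoc[symmetric])
    qed
    have s1: "\<bar>\<sigma>\<bar> = 1" using s by (simp add: \<sigma>_def)
    have "s \<in> D p" if "p \<in> F" for p
      using TG[of p] TG[of one] that s1 by (simp add: D_def G_def)
    then show ?thesis by blast
  qed
  have "UNIV \<inter> (\<Inter>p\<in>P. D p) \<noteq> {}"
    by (rule compact_imp_fip_image[OF cS clD fip])
  then obtain s where sD: "\<And>p. p \<in> P \<Longrightarrow> s \<in> D p" by blast
  define \<sigma> where "\<sigma> = T one s"
  have sig1: "\<bar>\<sigma>\<bar> = 1" using sD[OF one_P] by (simp add: D_def \<sigma>_def)
  have A: "T p s = \<sigma>" if "p \<in> P" for p using sD[OF that] by (simp add: D_def \<sigma>_def)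
  have B: "T f s = 0" if V: "open V" "k \<in> V" "\<forall>x\<in>V. f x = 0" for f :: "('a, real) bcontfun" and V
  proof -
    have "closed (- V)" using V(1) by (simp add: closed_Compl)
    moreover have "{k} \<inter> - V = {}" using V(2) by auto
    ultimately obtain \<phi> :: "'a \<Rightarrow> real" where \<phi>: "continuous_on UNIV \<phi>" "\<And>x. 0 \<le> \<phi> x \<and> \<phi> x \<le> 1"
      "\<phi> k = 0" "\<And>x. x \<notin> V \<Longrightarrow> \<phi> x = 1"
      using urysohn_t2[OF cK, of "{k}" "- V"] by auto
    define p where "p = Bcontfun (\<lambda>x. 1 - \<phi> x)"
    have pa: "apply_bcontfun p x = 1 - \<phi> x" for x
      unfolding p_def using mk_bcf[OF cK, of "\<lambda>x. 1 - \<phi> x"] \<phi>(1)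
      by (simp add: continuous_on_diff continuous_on_const)
    have pP: "p \<in> P" unfolding P_def
    proof (intro CollectI conjI)
      show "norm p \<le> 1" by (rule norm_bound) (use \<phi>(2) in \<open>auto simp: pa\<close>)
      show "p k = 1" by (simp add: pa \<phi>(3))
    qed
    show ?thesis
    proof (cases "f = 0")
      case True
      then show ?thesis by (simp add: T_zero[OF LI])
    next
      case False
      define c where "c = norm f"
      have c: "c > 0" using False by (simp add: c_def)
      define f' where "f' = (1 / c) *\<^sub>R f"
      have f'a: "apply_bcontfun f' x = f x / c" for x by (simp add: f'_def)
      have f'b: "\<bar>f' x\<bar> \<le> 1" for x
        using abs_le_norm[of f x] c by (simp add: f'a c_def divide_simps)
      have "p + f' \<in> P" unfolding P_def
      proof (intro CollectI conjI)
        show "norm (p + f') \<le> 1"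
        proof (rule norm_bound)
          fix x
          show "norm (apply_bcontfun (p + f') x) \<le> 1"
          proof (cases "x \<in> V")
            case True
            then show ?thesis using V(3) \<phi>(2)[of x] by (simp add: pa f'a)
          next
            case False
            then show ?thesis using f'b[of x] \<phi>(4)[of x] by (simp add: pa)
          qed
        qed
        show "apply_bcontfun (p + f') k = 1" using V(2,3) by (simp add: pa f'a \<phi>(3))
      qed
      then have "T (p + f') s = \<sigma>" by (rule A)
      then have "T f' s = 0" using A[OF pP] by (simp add: T_add[OF LI])
      then show ?thesis using c by (simp add: f'_def T_scale[OF LI])
    qed
  qed
  have C: "T f s = 0" if fk: "f k = 0" for f :: "('a, real) bcontfun"
  proof (rule ccontr)
    assume ne: "T f s \<noteq> 0"
    define \<eta> where "\<eta> = \<bar>T f s\<bar> / 2"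
    have eta: "\<eta> > 0" using ne by (simp add: \<eta>_def)
    define g where "g = Bcontfun (\<lambda>x. f x - max (- \<eta>) (min (f x) \<eta>))"
    have ga: "apply_bcontfun g x = f x - max (- \<eta>) (min (f x) \<eta>)" for x
    proof -
      have "continuous_on UNIV (\<lambda>x. f x - max (- \<eta>) (min (f x) \<eta>))"
        by (intro continuous_intros) auto
      then show ?thesis unfolding g_def using mk_bcf[OF cK] by simp
    qed
    have "open {x. \<bar>f x\<bar> < \<eta>}" by (intro open_Collect_less continuous_intros) auto
    moreover have "k \<in> {x. \<bar>f x\<bar> < \<eta>}" using fk eta by simp
    moreover have "\<forall>x\<in>{x. \<bar>f x\<bar> < \<eta>}. g x = 0" by (auto simp: ga)
    ultimately have Tg: "T g s = 0" by (rule B)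
    have "norm (f - g) \<le> \<eta>" by (rule norm_bound) (use eta in \<open>auto simp: ga\<close>)
    then have "\<bar>T (f - g) s\<bar> \<le> \<eta>" using T_abs[OF LI, of "f - g" s] by simp
    then have "\<bar>T f s\<bar> \<le> \<eta>" using Tg by (simp add: T_diff[OF LI])
    then show False using eta by (simp add: \<eta>_def)
  qed
  show ?thesis
  proof (intro exI conjI allI)
    show "\<bar>\<sigma>\<bar> = 1" by (rule sig1)
    fix f :: "('a, real) bcontfun"
    have "T (f - apply_bcontfun f k *\<^sub>R one) s = 0" by (rule C) (simp add: one_def)
    then show "T f s = \<sigma> * f k" by (simp add: T_diff[OF LI] T_scale[OF LI] \<sigma>_def)
  qed
qed
end


lemma near_norming:
  fixes x' :: "'v::real_normed_vector \<Rightarrow>\<^sub>L real"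
  assumes "\<epsilon> > 0"
  shows "\<exists>f. norm f \<le> 1 \<and> blinfun_apply x' f > norm x' - \<epsilon>"
proof (rule ccontr)
  assume "\<not> ?thesis"
  then have H: "\<And>f. norm f \<le> 1 \<Longrightarrow> blinfun_apply x' f \<le> norm x' - \<epsilon>" by (meson not_le)
  have nn: "0 \<le> norm x' - \<epsilon>" using H[of 0] by simp
  have "norm x' \<le> norm x' - \<epsilon>"
  proof (rule norm_blinfun_bound[OF nn])
    fix f :: 'v
    show "norm (blinfun_apply x' f) \<le> (norm x' - \<epsilon>) * norm f"
    proof (cases "f = 0")
      case True then show ?thesis by simp
    next
      case False
      define u where "u = f /\<^sub>R norm f"
      have nu: "norm u \<le> 1" "norm (- u) \<le> 1" using False by (simp_all add: u_def)
      have "\<bar>blinfun_apply x' u\<bar> \<le> norm x' - \<epsilon>"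
        using H[OF nu(1)] H[OF nu(2)] by (simp add: blinfun.minus_right)
      moreover have "blinfun_apply x' f = norm f * blinfun_apply x' u"
        using False by (simp add: u_def blinfun.scaleR_right)
      ultimately show ?thesis by (simp add: abs_mult mult.commute mult_left_mono)
    qed
  qed
  then show False using assms by simp
qed

lemma decomp:
  fixes w :: "nat \<Rightarrow> 'b::topological_space \<Rightarrow> real"
  assumes cS: "compact (UNIV::'b set)" and wc: "\<And>n. continuous_on UNIV (w n)"
    and wn: "\<And>n s. 0 \<le> w n s" and r: "0 \<le> r"
  shows "(\<And>s. \<bar>apply_bcontfun v s\<bar> \<le> (\<Sum>n<N. w n s) + r) \<Longrightarrow>
    \<exists>vs. (\<forall>n<N. \<forall>s. \<bar>apply_bcontfun (vs n) s\<bar> \<le> w n s) \<and>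
      (\<forall>s. \<bar>apply_bcontfun v s - (\<Sum>n<N. apply_bcontfun (vs n) s)\<bar> \<le> r)"
proof (induction N arbitrary: v)
  case 0
  then show ?case by auto
next
  case (Suc N)
  define c where "c = Bcontfun (\<lambda>s. max (- w N s) (min (apply_bcontfun v s) (w N s)))"
  have ca: "apply_bcontfun c s = max (- w N s) (min (apply_bcontfun v s) (w N s))" for s
  proof -
    have "continuous_on UNIV (\<lambda>s. max (- w N s) (min (apply_bcontfun v s) (w N s)))"
      by (intro continuous_intros wc) auto
    then show ?thesis unfolding c_def using mk_bcf[OF cS] by simp
  qed
  have sn: "0 \<le> (\<Sum>n<N. w n s)" for s by (intro sum_nonneg wn)
  have "\<bar>apply_bcontfun (v - c) s\<bar> \<le> (\<Sum>n<N. w n s) + r" for s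
    using Suc.prems[of s] sn[of s] wn[of N s] r by (simp add: ca)
  then obtain vs where vs: "\<forall>n<N. \<forall>s. \<bar>apply_bcontfun (vs n) s\<bar> \<le> w n s"
    "\<forall>s. \<bar>apply_bcontfun (v - c) s - (\<Sum>n<N. apply_bcontfun (vs n) s)\<bar> \<le> r"
    using Suc.IH by blast
  define vs' where "vs' = vs(N := c)"
  have s': "(\<Sum>n<N. apply_bcontfun (vs' n) s) = (\<Sum>n<N. apply_bcontfun (vs n) s)" for s
    by (rule sum.cong) (auto simp: vs'_def)
  show ?case
  proof (intro exI[of _ vs'] conjI allI impI)
    fix n s assume "n < Suc N"
    then show "\<bar>apply_bcontfun (vs' n) s\<bar> \<le> w n s"
      using vs(1) wn[of N s] by (cases "n = N") (auto simp: vs'_def ca)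
  next
    fix s
    show "\<bar>apply_bcontfun v s - (\<Sum>n<Suc N. apply_bcontfun (vs' n) s)\<bar> \<le> r"
      using vs(2)[rule_format, of s] by (simp add: s' vs'_def algebra_simps)
  qed
qed



lemma geom_half: "(\<Sum>n<N. (1/2::real)^Suc n) = 1 - (1/2)^N"
  by (induction N) (auto simp: algebra_simps)

context
  fixes T :: "('a::t2_space, real) bcontfun \<Rightarrow> ('b::t2_space, real) bcontfun"
    and h :: "'a \<Rightarrow> 'b" and e :: "'a \<Rightarrow> real"
  assumes LI: "linear_isometry T"
    and cK: "compact (UNIV::'a set)" and cS: "compact (UNIV::'b set)"
    and hS: "\<And>s. s \<notin> range h \<Longrightarrow> norm (FT T s) < 1"
begin

lemma vanish:
  fixes y :: "('b, real) bcontfun \<Rightarrow>\<^sub>L real" and g :: "('b, real) bcontfun"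
  assumes near: "\<And>\<epsilon>. \<epsilon> > 0 \<Longrightarrow> \<exists>f. norm f \<le> 1 \<and> blinfun_apply y (T f) > norm y - \<epsilon>"
    and gv: "\<And>k. g (h k) = 0"
  shows "blinfun_apply y g \<le> 0"
proof -
  define a where "a = norm y"
  have "\<forall>n. \<exists>f. norm f \<le> 1 \<and> blinfun_apply y (T f) > a - (1/2)^Suc n"
    using near unfolding a_def by simp
  then obtain fs where fs: "\<And>n. norm (fs n) \<le> 1" and fy: "\<And>n. blinfun_apply y (T (fs n)) > a - (1/2)^Suc n"
    by metis
  define u where "u n = T (fs n)" for n
  have ua: "\<bar>apply_bcontfun (u n) s\<bar> \<le> 1" for n s
    using T_abs[OF LI, of "fs n" s] fs[of n] unfolding u_def by linarith
  have key: "M * blinfun_apply y g \<le> 1 + a" if M: "M > 0" for M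
  proof -
    define w where "w n s = 1 - \<bar>apply_bcontfun (u n) s\<bar>" for n s
    have wc: "continuous_on UNIV (w n)" for n unfolding w_def by (intro continuous_intros) auto
    have wn: "0 \<le> w n s" for n s using ua[of n s] by (simp add: w_def)
    define W where "W N = {s. M * \<bar>g s\<bar> - 1 < (\<Sum>n<N. w n s)}" for N
    have Wo: "open (W N)" for N
      unfolding W_def by (intro open_Collect_less continuous_intros continuous_on_sum wc) auto
    have Wmono: "s \<in> W N'" if "s \<in> W N" "N \<le> N'" for s N N'
    proof -
      have "(\<Sum>n<N. w n s) \<le> (\<Sum>n<N'. w n s)"
        by (rule sum_mono2) (use that wn in auto)
      then show ?thesis using that by (simp add: W_def)
    qed
    have cover: "UNIV \<subseteq> (\<Union>N\<in>UNIV. W N)"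
    proof
      fix s :: 'b
      show "s \<in> (\<Union>N\<in>UNIV. W N)"
      proof (cases "s \<in> range h")
        case True
        then have "g s = 0" using gv by auto
        then have "s \<in> W 0" by (simp add: W_def)
        then show ?thesis by blast
      next
        case False
        define c where "c = 1 - norm (FT T s)"
        have c: "c > 0" using hS[OF False] by (simp add: c_def)
        have wc': "c \<le> w n s" for n
        proof -
          have "\<bar>apply_bcontfun (u n) s\<bar> = \<bar>blinfun_apply (FT T s) (fs n)\<bar>"
            by (simp add: u_def FT_apply[OF LI])
          also have "\<dots> \<le> norm (FT T s) * norm (fs n)" using norm_blinfun[of "FT T s" "fs n"] by simp
          also have "\<dots> \<le> norm (FT T s)" using fs[of n] norm_FT[OF LI, of s]
            by (simp add: mult_left_le)
          finally show ?thesis by (simp add: w_def c_def)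
        qed
        obtain N :: nat where N: "M * \<bar>g s\<bar> / c < real N" using reals_Archimedean2 by blast
        have "M * \<bar>g s\<bar> < real N * c" using N c by (simp add: divide_simps)
        also have "\<dots> = (\<Sum>n<N. c)" by simp
        also have "\<dots> \<le> (\<Sum>n<N. w n s)" by (intro sum_mono wc')
        finally have "s \<in> W N" by (simp add: W_def)
        then show ?thesis by blast
      qed
    qed
    obtain C' where C': "finite C'" "UNIV \<subseteq> (\<Union>N\<in>C'. W N)"
      using compactE_image[OF cS Wo cover] by metis
    define N0 where "N0 = Max (insert 0 C')"
    have allW: "s \<in> W N0" for s
    proof -
      obtain N where "N \<in> C'" "s \<in> W N" using C'(2) by blast
      moreover have "N \<le> N0" using C'(1) \<open>N \<in> C'\<close> by (simp add: N0_def)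
      ultimately show ?thesis using Wmono by blast
    qed
    have bnd: "\<bar>apply_bcontfun (M *\<^sub>R g) s\<bar> \<le> (\<Sum>n<N0. w n s) + 1" for s
      using allW[of s] M by (simp add: W_def abs_mult)
    obtain vs where vs: "\<forall>n<N0. \<forall>s. \<bar>apply_bcontfun (vs n) s\<bar> \<le> w n s"
      "\<forall>s. \<bar>apply_bcontfun (M *\<^sub>R g) s - (\<Sum>n<N0. apply_bcontfun (vs n) s)\<bar> \<le> 1"
      using decomp[where w=w and r=1, OF cS wc wn zero_le_one, where v="M *\<^sub>R g" and N=N0] bnd by blast
    define rest where "rest = M *\<^sub>R g - sum vs {..<N0}"
    have nr: "norm rest \<le> 1"
      by (rule norm_bound) (use vs(2) in \<open>simp add: rest_def apply_sum\<close>)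
    have decompo: "M *\<^sub>R g = sum vs {..<N0} + rest" by (simp add: rest_def)
    have yv: "blinfun_apply y (vs n) \<le> a - blinfun_apply y (u n)" if "n < N0" for n
    proof -
      have "norm (u n + vs n) \<le> 1"
      proof (rule norm_bound)
        fix s
        have "\<bar>apply_bcontfun (u n) s + apply_bcontfun (vs n) s\<bar> \<le> \<bar>apply_bcontfun (u n) s\<bar> + w n s"
          using vs(1) that by (meson abs_triangle_ineq add_left_mono order.trans)
        then show "norm (apply_bcontfun (u n + vs n) s) \<le> 1" by (simp add: w_def)
      qed
      then have "blinfun_apply y (u n + vs n) \<le> a"
        using norm_blinfun[of y "u n + vs n"] unfolding a_def
        by (metis abs_le_D1 mult_left_le norm_ge_zero order_trans real_norm_def)
      then show ?thesis by (simp add: blinfun.add_right)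
    qed
    have yr: "blinfun_apply y rest \<le> a"
      using norm_blinfun[of y rest] nr unfolding a_def
      by (metis abs_le_D1 mult_left_le norm_ge_zero order_trans real_norm_def)
    have "M * blinfun_apply y g = blinfun_apply y (M *\<^sub>R g)" by (simp add: blinfun.scaleR_right)
    also have "\<dots> = (\<Sum>n<N0. blinfun_apply y (vs n)) + blinfun_apply y rest"
      by (subst decompo) (simp add: blinfun.add_right blinfun.sum_right)
    also have "\<dots> \<le> (\<Sum>n<N0. a - blinfun_apply y (u n)) + a"
      by (intro add_mono sum_mono yv yr) auto
    also have "\<dots> \<le> (\<Sum>n<N0. (1/2::real)^Suc n) + a"
    proof (intro add_mono sum_mono order.refl)
      fix n
      show "a - blinfun_apply y (u n) \<le> (1/2::real)^Suc n" using fy[of n] unfolding u_def by linarith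
    qed
    also have "\<dots> \<le> 1 + a" unfolding geom_half by simp
    finally show ?thesis .
  qed
  show ?thesis
  proof (rule ccontr)
    assume "\<not> ?thesis"
    then have pos: "blinfun_apply y g > 0" by simp
    have a0: "a \<ge> 0" by (simp add: a_def)
    define M where "M = (2 + a) / blinfun_apply y g"
    have "M > 0" using pos a0 by (simp add: M_def)
    from key[OF this] have "2 + a \<le> 1 + a" using pos by (simp add: M_def)
    then show False by simp
  qed
qed

end


lemma cont_app_comp[continuous_intros]:
  "continuous_on S g \<Longrightarrow> continuous_on S (\<lambda>x. apply_bcontfun (F::('x::topological_space, real) bcontfun) (g x))"
  by (rule continuous_on_compose2[OF continuous_on_apply_bcontfun]) auto

lemma sep_points:
  assumes cK: "compact (UNIV::'x::t2_space set)"
    and H: "\<And>f::('x, real) bcontfun. f a = f b"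
  shows "a = b"
proof (rule ccontr)
  assume ne: "a \<noteq> b"
  obtain \<phi> :: "'x \<Rightarrow> real" where \<phi>: "continuous_on UNIV \<phi>" "\<phi> a = 0" "\<phi> b = 1"
    using urysohn_t2[OF cK, of "{a}" "{b}"] ne by auto
  have "apply_bcontfun (Bcontfun \<phi>) = \<phi>" by (rule mk_bcf[OF cK \<phi>(1)])
  then show False using H[of "Bcontfun \<phi>"] \<phi> by simp
qed

theorem backward:
  fixes T :: "('a::t2_space, real) bcontfun \<Rightarrow> ('b::t2_space, real) bcontfun"
  assumes cK: "compact (UNIV :: 'a set)" and cS: "compact (UNIV :: 'b set)"
    and LI: "linear_isometry T"
    and hom: "homeomorphism UNIV S0 h g0" and ec: "continuous_on UNIV e"
    and e1: "\<And>k. e k \<in> {-1, 1}" and FTh: "\<And>k. FT T (h k) = e k *\<^sub>R dirac k"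
    and hS0: "\<And>s. s \<in> UNIV - S0 \<Longrightarrow> norm (FT T s) < 1"
  shows "U_embedding T"
proof -
  have hc: "continuous_on UNIV h" and rh: "range h = S0" using hom by (auto simp: homeomorphism_def)
  have ea: "\<bar>e k\<bar> = 1" for k using e1[of k] by auto
  have hT: "T f (h k) = e k * f k" for f k
  proof -
    have "blinfun_apply (FT T (h k)) f = e k * f k" by (simp add: FTh blinfun.scaleR_left)
    then show ?thesis by (simp add: FT_apply[OF LI])
  qed
  have hS: "norm (FT T s) < 1" if "s \<notin> range h" for s using hS0 that rh by auto
  show ?thesis unfolding U_embedding_def
  proof (intro conjI allI LI)
    fix x' :: "('a, real) bcontfun \<Rightarrow>\<^sub>L real"
    show "\<exists>!y'. (\<lambda>x. blinfun_apply y' (T x)) = blinfun_apply x' \<and> norm y' = norm x'"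
    proof (rule ex1I[of _ "Yop h e x'"])
      show "(\<lambda>x. blinfun_apply (Yop h e x') (T x)) = blinfun_apply x' \<and> norm (Yop h e x') = norm x'"
        using Yop_T[OF cK hc ec ea LI hT] norm_Yop[OF cK hc ec ea LI hT] by auto
    next
      fix y assume y: "(\<lambda>x. blinfun_apply y (T x)) = blinfun_apply x' \<and> norm y = norm x'"
      have yT: "blinfun_apply y (T f) = blinfun_apply x' f" for f using y by metis
      have near: "\<exists>f. norm f \<le> 1 \<and> blinfun_apply y (T f) > norm y - \<epsilon>" if "\<epsilon> > 0" for \<epsilon>
        using near_norming[OF that, of x'] y by (simp add: yT)
      show "y = Yop h e x'"
      proof (rule blinfun_eqI)
        fix g :: "('b, real) bcontfun"
        define g' where "g' = g - T (Eop h e g)"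
        have gv: "g' (h k) = 0" for k
          by (simp add: g'_def hT Eop_apply[OF cK hc ec ea] mult.assoc[symmetric] ee[OF cK hc ec ea])
        have gv2: "(- g') (h k) = 0" for k using gv by simp
        have "blinfun_apply y g' \<le> 0" by (rule vanish[OF LI cK cS hS near gv])
        moreover have "blinfun_apply y (- g') \<le> 0" by (rule vanish[OF LI cK cS hS near gv2])
        ultimately have "blinfun_apply y g' = 0" by (simp add: blinfun.minus_right)
        then have "blinfun_apply y g = blinfun_apply y (T (Eop h e g))"
          by (simp add: g'_def blinfun.diff_right)
        then show "blinfun_apply y g = blinfun_apply (Yop h e x') g"
          by (simp add: yT Yop_apply[OF cK hc ec ea])
      qed
    qed
  qed
qed



theorem forward:
  fixes T :: "('a::t2_space, real) bcontfun \<Rightarrow> ('b::t2_space, real) bcontfun"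
  assumes cK: "compact (UNIV :: 'a set)" and cS: "compact (UNIV :: 'b set)"
    and LI: "linear_isometry T" and U: "U_embedding T"
  shows "\<exists>(S0 :: 'b set) (h :: 'a \<Rightarrow> 'b) (\<epsilon> :: 'a \<Rightarrow> real).
       closed S0 \<and> (\<exists>g. homeomorphism UNIV S0 h g) \<and>
       continuous_on UNIV \<epsilon> \<and> (\<forall>k. \<epsilon> k \<in> {-1, 1}) \<and>
       (\<forall>k. FT T (h k) = \<epsilon> k *\<^sub>R dirac k) \<and>
       (\<forall>s \<in> UNIV - S0. norm (FT T s) < 1)"
proof -
  have U1: "\<exists>!y'. (\<lambda>x. blinfun_apply y' (T x)) = blinfun_apply x' \<and> norm y' = norm x'" for x' :: "('a, real) bcontfun \<Rightarrow>\<^sub>L real"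
    using U unfolding U_embedding_def by blast
  have ex: "\<forall>k. \<exists>p :: 'b \<times> real. \<bar>snd p\<bar> = 1 \<and> (\<forall>f. T f (fst p) = snd p * f k)"
  proof
    fix k
    obtain s \<sigma> where "\<bar>\<sigma>\<bar> = 1" "\<forall>f. T f s = \<sigma> * f k" using holsz[OF LI cK cS, of k] by blast
    then show "\<exists>p :: 'b \<times> real. \<bar>snd p\<bar> = 1 \<and> (\<forall>f. T f (fst p) = snd p * f k)"
      by (intro exI[of _ "(s, \<sigma>)"]) simp
  qed
  obtain hp where hp: "\<forall>k. \<bar>snd (hp k)\<bar> = 1 \<and> (\<forall>f. T f (fst (hp k)) = snd (hp k) * f k)"
    using choice[OF ex] by blast
  define h where "h k = fst (hp k)" for k
  define e where "e k = snd (hp k)" for k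
  have he: "\<And>k. \<bar>e k\<bar> = 1" "\<And>k f. T f (h k) = e k * f k" using hp by (auto simp: h_def e_def)
  have uniq: "s = h k \<and> \<sigma> = e k" if s: "\<bar>\<sigma>\<bar> = 1" "\<And>f. T f s = \<sigma> * f k" for s \<sigma> k
  proof -
    have ok: "(\<lambda>x. blinfun_apply (c *\<^sub>R dirac t) (T x)) = blinfun_apply (dirac k) \<and> norm (c *\<^sub>R dirac t) = norm (dirac k)"
      if "\<bar>c\<bar> = 1" "\<And>f. T f t = c * f k" for c t
    proof -
      have cc: "c * c = 1" using that(1) by (metis abs_mult_self_eq mult_1_left)
      show ?thesis using that cc by (auto simp: blinfun.scaleR_left norm_dirac mult.assoc[symmetric])
    qed
    have eq: "\<sigma> *\<^sub>R dirac s = e k *\<^sub>R dirac (h k)"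
      using U1[of "dirac k"] ok[OF s] ok[OF he(1) he(2)] by blast
    define one where "one = (const_bcontfun 1 :: ('b, real) bcontfun)"
    have "blinfun_apply (\<sigma> *\<^sub>R dirac s) one = blinfun_apply (e k *\<^sub>R dirac (h k)) one" using eq by simp
    then have se: "\<sigma> = e k" by (simp add: one_def blinfun.scaleR_left)
    have "apply_bcontfun f s = apply_bcontfun f (h k)" for f :: "('b, real) bcontfun"
    proof -
      have "blinfun_apply (\<sigma> *\<^sub>R dirac s) f = blinfun_apply (e k *\<^sub>R dirac (h k)) f" using eq by simp
      then show ?thesis using se s(1) by (auto simp: blinfun.scaleR_left)
    qed
    then have "s = h k" by (rule sep_points[OF cS])
    then show ?thesis using se by simp
  qed
  define one where "one = (const_bcontfun 1 :: ('a, real) bcontfun)"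
  define Z where "Z \<sigma> = {p :: 'a \<times> 'b. \<forall>f. T f (snd p) = \<sigma> * f (fst p)}" for \<sigma>
  have Zc: "closed (Z \<sigma>)" for \<sigma>
  proof -
    have "Z \<sigma> = (\<Inter>f. {p. T f (snd p) = \<sigma> * f (fst p)})" by (auto simp: Z_def)
    moreover have "closed {p :: 'a \<times> 'b. T f (snd p) = \<sigma> * f (fst p)}" for f
      by (intro closed_Collect_eq continuous_intros continuous_on_fst continuous_on_snd)
    ultimately show ?thesis by auto
  qed
  have hc: "continuous_on UNIV h"
    unfolding continuous_on_closed_vimage[OF closed_UNIV]
  proof (intro allI impI)
    fix B :: "'b set" assume B: "closed B"
    have eqB: "h -` B \<inter> UNIV = fst ` ((Z 1 \<union> Z (-1)) \<inter> (UNIV \<times> B))"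
    proof (intro set_eqI iffI)
      fix k assume "k \<in> h -` B \<inter> UNIV"
      moreover have "(k, h k) \<in> Z (e k)" using he by (simp add: Z_def)
      moreover have "e k = 1 \<or> e k = -1" using he(1)[of k] by auto
      ultimately show "k \<in> fst ` ((Z 1 \<union> Z (-1)) \<inter> (UNIV \<times> B))"
        by (auto intro!: image_eqI[of _ _ "(k, h k)"])
    next
      fix k assume "k \<in> fst ` ((Z 1 \<union> Z (-1)) \<inter> (UNIV \<times> B))"
      then obtain s \<sigma> where "\<sigma> = 1 \<or> \<sigma> = -1" "(k, s) \<in> Z \<sigma>" "s \<in> B" by force
      then have "\<bar>\<sigma>\<bar> = 1" "\<And>f. T f s = \<sigma> * f k" by (auto simp: Z_def)
      then have "s = h k" using uniq by blast
      then show "k \<in> h -` B \<inter> UNIV" using \<open>s \<in> B\<close> by simp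
    qed
    have "compact (UNIV :: ('a \<times> 'b) set)" using compact_Times[OF cK cS] by simp
    moreover have "closed ((Z 1 \<union> Z (-1)) \<inter> (UNIV \<times> B))"
      by (intro closed_Int closed_Un closed_Times Zc B closed_UNIV)
    ultimately have "compact ((Z 1 \<union> Z (-1)) \<inter> (UNIV \<times> B))"
      using compact_Int_closed by fastforce
    then have "compact (fst ` ((Z 1 \<union> Z (-1)) \<inter> (UNIV \<times> B)))"
      by (intro compact_continuous_image continuous_on_fst continuous_on_id)
    then show "closed (h -` B \<inter> UNIV)" unfolding eqB by (rule compact_imp_closed)
  qed
  have ec: "continuous_on UNIV e"
  proof -
    have "continuous_on UNIV (\<lambda>k. T one (h k))" by (intro continuous_intros hc)
    moreover have "T one (h k) = e k" for k using he(2)[of one k] by (simp add: one_def)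
    ultimately show ?thesis by simp
  qed
  have inj: "inj h"
  proof (rule injI)
    fix k1 k2 assume eq: "h k1 = h k2"
    have e12: "e k1 = e k2" using he(2)[of one k1] he(2)[of one k2] eq by (simp add: one_def)
    have "apply_bcontfun f k1 = apply_bcontfun f k2" for f :: "('a, real) bcontfun"
      using he(2)[of f k1] he(2)[of f k2] eq e12 he(1)[of k1] by auto
    then show "k1 = k2" by (rule sep_points[OF cK])
  qed
  have cl: "closed (range h)"
    by (rule compact_imp_closed, rule compact_continuous_image[OF hc cK])
  have homo: "\<exists>g. homeomorphism UNIV (range h) h g"
    by (rule homeomorphism_compact[OF cK hc refl]) (use inj in \<open>simp add: inj_on_def inj_def\<close>)
  have e1: "e k \<in> {-1, 1}" for k using he(1)[of k] by auto
  have FTe: "FT T (h k) = e k *\<^sub>R dirac k" for k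
    by (rule blinfun_eqI) (simp add: FT_apply[OF LI] he(2) blinfun.scaleR_left)
  have out: "norm (FT T s) < 1" if s: "s \<in> UNIV - range h" for s
  proof (rule ccontr)
    assume "\<not> ?thesis"
    then have n1: "norm (FT T s) = 1" using norm_FT[OF LI, of s] by simp
    define x' where "x' = FT T s"
    have c1: "(\<lambda>x. blinfun_apply (dirac s) (T x)) = blinfun_apply x' \<and> norm (dirac s) = norm x'"
      using n1 by (auto simp: x'_def FT_apply[OF LI] norm_dirac)
    have c2: "(\<lambda>x. blinfun_apply (Yop h e x') (T x)) = blinfun_apply x' \<and> norm (Yop h e x') = norm x'"
      using Yop_T[OF cK hc ec he(1) LI he(2)] norm_Yop[OF cK hc ec he(1) LI he(2)] by auto
    have eq: "dirac s = Yop h e x'" using U1[of x'] c1 c2 by blast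
    have disj: "{s} \<inter> range h = {}" using s by auto
    obtain \<phi> :: "'b \<Rightarrow> real" where \<phi>0: "continuous_on UNIV \<phi>" "\<And>x. 0 \<le> \<phi> x \<and> \<phi> x \<le> 1"
       "\<And>x. x \<in> {s} \<Longrightarrow> \<phi> x = 0" "\<And>x. x \<in> range h \<Longrightarrow> \<phi> x = 1"
      using urysohn_t2[OF cS closed_singleton cl disj] by blast
    have \<phi>: "continuous_on UNIV \<phi>" "\<phi> s = 0" "\<And>k. \<phi> (h k) = 1"
      using \<phi>0(1) \<phi>0(3)[of s] \<phi>0(4)[OF rangeI] by auto
    define g where "g = Bcontfun (\<lambda>x. 1 - \<phi> x)"
    have ga: "apply_bcontfun g x = 1 - \<phi> x" for x
      unfolding g_def using mk_bcf[OF cS, of "\<lambda>x. 1 - \<phi> x"] \<phi>(1)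
      by (simp add: continuous_on_diff continuous_on_const)
    have "Eop h e g = 0"
      by (rule bcontfun_eqI) (simp add: Eop_apply[OF cK hc ec he(1)] ga \<phi>(3))
    then have "blinfun_apply (Yop h e x') g = 0" by (simp add: Yop_apply[OF cK hc ec he(1)])
    moreover have "blinfun_apply (dirac s) g = 1" by (simp add: ga \<phi>(2))
    ultimately show False using eq by simp
  qed
  show ?thesis
    by (rule exI[of _ "range h"], rule exI[of _ h], rule exI[of _ e]) (use cl homo ec e1 FTe out in blast)
qed


theorem theorem6p15:
  fixes T :: "('a::t2_space, real) bcontfun \<Rightarrow> ('b::t2_space, real) bcontfun"
  assumes "compact (UNIV :: 'a set)" and "compact (UNIV :: 'b set)"
    and "linear_isometry T"
  shows "U_embedding T \<longleftrightarrow>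
    (\<exists>(S0 :: 'b set) (h :: 'a \<Rightarrow> 'b) (\<epsilon> :: 'a \<Rightarrow> real).
       closed S0 \<and> (\<exists>g. homeomorphism UNIV S0 h g) \<and>
       continuous_on UNIV \<epsilon> \<and> (\<forall>k. \<epsilon> k \<in> {-1, 1}) \<and>
       (\<forall>k. FT T (h k) = \<epsilon> k *\<^sub>R dirac k) \<and>
       (\<forall>s \<in> UNIV - S0. norm (FT T s) < 1))"
proof
  assume "U_embedding T"
  then show "\<exists>(S0 :: 'b set) (h :: 'a \<Rightarrow> 'b) (\<epsilon> :: 'a \<Rightarrow> real).
       closed S0 \<and> (\<exists>g. homeomorphism UNIV S0 h g) \<and>
       continuous_on UNIV \<epsilon> \<and> (\<forall>k. \<epsilon> k \<in> {-1, 1}) \<and>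
       (\<forall>k. FT T (h k) = \<epsilon> k *\<^sub>R dirac k) \<and>
       (\<forall>s \<in> UNIV - S0. norm (FT T s) < 1)"
    by (rule forward[OF assms])
next
  assume "\<exists>(S0 :: 'b set) (h :: 'a \<Rightarrow> 'b) (\<epsilon> :: 'a \<Rightarrow> real).
       closed S0 \<and> (\<exists>g. homeomorphism UNIV S0 h g) \<and>
       continuous_on UNIV \<epsilon> \<and> (\<forall>k. \<epsilon> k \<in> {-1, 1}) \<and>
       (\<forall>k. FT T (h k) = \<epsilon> k *\<^sub>R dirac k) \<and>
       (\<forall>s \<in> UNIV - S0. norm (FT T s) < 1)"
  then obtain S0 h e g0 where "homeomorphism UNIV S0 h g0" "continuous_on UNIV e"
    "\<And>k. e k \<in> {-1, 1}" "\<And>k. FT T (h k) = e k *\<^sub>R dirac k"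
    "\<And>s. s \<in> UNIV - S0 \<Longrightarrow> norm (FT T s) < 1"
    by blast
  then show "U_embedding T" by (rule backward[OF assms])
qed

end
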